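(* Let $p$ be a prime, $m\mid n$, $s=p^m-1$, $t=(p^n-1)/(p^m-1)$, and assume $\gcd(s,t)=1$. Let $\alpha$ be a generator of $\mathbb{F}_{p^n}^\times$, $\beta=\alpha^t\in\mathbb{F}_{p^m}^\times$, $\gamma=\alpha^s$, and let $B_{i,j}=\mathrm{tr}_{\mathbb{F}_{p^n}/\mathbb{F}_p}(\beta^i\gamma^j)$ for $(i,j)\in\mathbb{Z}_s\times\mathbb{Z}_t$. For each $j$, consider the column $(B_{i,j})_{0\le i<s}$. Then: (1) if $\mathrm{tr}_{\mathbb{F}_{p^n}/\mathbb{F}_{p^m}}(\gamma^j)=0$, the column is identically zero; (2) if $\mathrm{tr}_{\mathbb{F}_{p^n}/\mathbb{F}_{p^m}}(\gamma^j)=\beta^r\in\mathbb{F}_{p^m}^\times$, then the column equals $\mathsf{DB}_\beta^{[r]}$, i.e. $B_{i,j}=\mathrm{tr}_{\mathbb{F}_{p^m}/\mathbb{F}_p}(\beta^{r+i})$ for all $0\le i<s$.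
   Context: $\mathrm{tr}_{K/F}$ denotes the field trace. $\mathsf{DB}_\beta=(\mathrm{tr}_{\mathbb{F}_{p^m}/\mathbb{F}_p}(\beta^i))_{0\le i<s}$ and for an integer $r$, $\mathsf{DB}_\beta^{[r]}$ is its cyclic shift $(\mathrm{tr}_{\mathbb{F}_{p^m}/\mathbb{F}_p}(\beta^{r+i}))_{0\le i<s}$, indices mod $s$. *)

theory Defs
  imports "HOL-Computational_Algebra.Primes"
begin

text \<open>Trace from the finite field of q^d elements (a degree-d extension of the
subfield with q elements) down to that subfield, in Frobenius form:
x + x^q + ... + x^(q^(d-1)).\<close>
definition ff_trace :: "nat \<Rightarrow> nat \<Rightarrow> 'a::field \<Rightarrow> 'a" where
  "ff_trace q d x = (\<Sum>k<d. x ^ (q ^ k))"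

end

theory Submission
  imports Defs
begin

lemma nat_pm1_dvd: "(q::nat) - 1 dvd q ^ d - 1"
proof (induction d)
  case 0 then show ?case by simp
next
  case (Suc d)
  show ?case
  proof (cases "q = 0")
    case True then show ?thesis by simp
  next
    case False
    then have "q ^ d \<ge> 1" by simp
    then have "q ^ Suc d - 1 = q * (q ^ d - 1) + (q - 1)" using False
      by (simp add: algebra_simps diff_mult_distrib2)
    then show ?thesis using Suc by (simp add: dvd_add)
  qed
qed

lemma field_pow_card:
  fixes x :: "'a::{finite,field}"
  shows "x ^ card (UNIV :: 'a set) = x"
proof (cases "x = 0")
  case False
  have "x * (\<Prod>y\<in>UNIV-{0}. x * y) = x * x ^ (card (UNIV :: 'a set) - 1) * \<Prod>(UNIV-{0})"
    by (simp add: prod.distrib mult_ac)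
  also have "x * x ^ (card (UNIV :: 'a set) - 1) = x ^ Suc (card (UNIV :: 'a set) - 1)"
    by (subst power_Suc) auto
  also have "Suc (card (UNIV :: 'a set) - 1) = card (UNIV :: 'a set)"
    using finite_UNIV_card_ge_0[where ?'a = 'a] by simp
  also have "(\<Prod>y\<in>UNIV-{0}. x * y) = (\<Prod>y\<in>UNIV-{0}. y)"
    by (rule prod.reindex_bij_witness[of _ "\<lambda>y. y / x" "\<lambda>y. x * y"]) (use False in auto)
  finally show ?thesis
    by simp
qed (use finite_UNIV_card_ge_0[where ?'a = 'a] in auto)

lemma sum_split_mult:
  fixes f :: "nat \<Rightarrow> 'b::comm_monoid_add"
  assumes "m > 0"
  shows "(\<Sum>k<m*d. f k) = (\<Sum>a<m. \<Sum>b<d. f (a + m*b))"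
proof -
  have "(\<Sum>k<m*d. f k) = (\<Sum>(a,b)\<in>{..<m}\<times>{..<d}. f (a + m*b))"
  proof (rule sum.reindex_bij_witness[of _ "\<lambda>(a,b). a + m*b" "\<lambda>k. (k mod m, k div m)"])
    fix ab assume "ab \<in> {..<m}\<times>{..<d}"
    then obtain a b where ab: "ab = (a,b)" "a < m" "b < d" by auto
    have "a + m*b < m + m*b" using ab by simp
    also have "\<dots> \<le> m*d" using ab by (metis Suc_leI mult_Suc_right add.commute mult_le_mono2)
    finally show "(case ab of (a, b) \<Rightarrow> a + m * b) \<in> {..<m*d}" using ab by simp
    show "((case ab of (a, b) \<Rightarrow> a + m * b) mod m, (case ab of (a, b) \<Rightarrow> a + m * b) div m) = ab"
      using ab by simp
  next
    fix k assume k: "k \<in> {..<m*d}"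
    show "(k mod m, k div m) \<in> {..<m}\<times>{..<d}" using k assms
      by (auto simp: less_mult_imp_div_less div_less_iff_less_mult mult.commute)
    show "(case (k mod m, k div m) of (a, b) \<Rightarrow> a + m * b) = k" by simp
    show "(case (k mod m, k div m) of (a, b) \<Rightarrow> f (a + m * b)) = f k" by simp
  qed
  also have "\<dots> = (\<Sum>a<m. \<Sum>b<d. f (a + m*b))"
    by (simp add: sum.cartesian_product)
  finally show ?thesis .
qed

theorem mainTheorem5:
  fixes \<alpha> :: "'a::{finite,field}" and p m n :: nat
  assumes "prime p"
    and "CHAR('a) = p"
    and "card (UNIV :: 'a set) = p ^ n"
    and "m dvd n"
    and "gcd (p ^ m - 1) ((p ^ n - 1) div (p ^ m - 1)) = 1"
    and "\<alpha> \<noteq> 0"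
    and "\<forall>x::'a. x \<noteq> 0 \<longrightarrow> (\<exists>k::nat. x = \<alpha> ^ k)"
  shows "let s = p ^ m - 1; t = (p ^ n - 1) div (p ^ m - 1);
             \<beta> = \<alpha> ^ t; \<gamma> = \<alpha> ^ s
         in \<forall>j<t.
              (ff_trace (p ^ m) (n div m) (\<gamma> ^ j) = 0 \<longrightarrow>
                 (\<forall>i<s. ff_trace p n (\<beta> ^ i * \<gamma> ^ j) = 0))
            \<and> (\<forall>r::nat. ff_trace (p ^ m) (n div m) (\<gamma> ^ j) = \<beta> ^ r \<longrightarrow>
                 (\<forall>i<s. ff_trace p n (\<beta> ^ i * \<gamma> ^ j) = ff_trace p m (\<beta> ^ ((r + i) mod s))))"
proof -
  define s where "s = p ^ m - 1"
  define t where "t = (p ^ n - 1) div (p ^ m - 1)"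
  define d where "d = n div m"
  define \<beta> where "\<beta> = \<alpha> ^ t"
  define \<gamma> where "\<gamma> = \<alpha> ^ s"
  have p1: "p > 1" using assms(1) prime_gt_1_nat by blast
  have pc: "prime CHAR('a)" using assms(1,2) by simp
  have "n \<noteq> 0"
  proof
    assume "n = 0"
    then have "card (UNIV :: 'a set) = 1" using assms(3) by simp
    then obtain z :: 'a where "UNIV = {z}" using card_1_singletonE by blast
    then have "(0::'a) = 1" by (metis UNIV_I singletonD)
    then show False by simp
  qed
  then have "m > 0" using assms(4) by (cases "m = 0") auto
  have nmd: "n = m * d" using assms(4) by (simp add: d_def)
  have "s dvd p ^ n - 1" unfolding s_def nmd power_mult by (rule nat_pm1_dvd)
  then have st: "s * t = p ^ n - 1" by (simp add: t_def s_def)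
  have pm: "p ^ m = s + 1" unfolding s_def using p1 by simp
  have apow: "\<alpha> ^ (p ^ n - 1) = 1"
  proof -
    have "\<alpha> * \<alpha> ^ (p ^ n - 1) = \<alpha> * 1"
      using field_pow_card[of \<alpha>] assms(3) p1
      by (metis mult.right_neutral one_le_power power_Suc Suc_diff_le diff_Suc_1 less_imp_le)
    then show ?thesis using assms(6) by simp
  qed
  have bs: "\<beta> ^ s = 1" unfolding \<beta>_def
    by (metis apow st power_mult mult.commute)
  have bq: "\<beta> ^ (p ^ m) = \<beta>" using bs by (simp add: pm)
  have bqb: "\<beta> ^ ((p ^ m) ^ b) = \<beta>" for b
  proof (induction b)
    case 0 then show ?case by simp
  next
    case (Suc b)
    have "\<beta> ^ ((p ^ m) ^ Suc b) = (\<beta> ^ ((p ^ m) ^ b)) ^ (p ^ m)"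
      by (simp add: power_mult[symmetric] mult.commute)
    then show ?case using Suc bq by simp
  qed
  have biq: "(\<beta> ^ i) ^ ((p ^ m) ^ b) = \<beta> ^ i" for i b
    by (metis bqb power_mult mult.commute)
  have key: "ff_trace p n (\<beta> ^ i * x) = ff_trace p m (\<beta> ^ i * ff_trace (p ^ m) d x)" for i x
  proof -
    have "ff_trace p n (\<beta> ^ i * x) = (\<Sum>a<m. \<Sum>b<d. (\<beta> ^ i * x) ^ (p ^ (a + m*b)))"
      unfolding ff_trace_def nmd using sum_split_mult[OF \<open>m > 0\<close>] by blast
    also have "\<dots> = (\<Sum>a<m. (\<Sum>b<d. (\<beta> ^ i * x) ^ ((p ^ m) ^ b)) ^ (p ^ a))"
    proof (rule sum.cong[OF refl])
      fix a
      have "(\<Sum>b<d. (\<beta> ^ i * x) ^ ((p ^ m) ^ b)) ^ (p ^ a) = (\<Sum>b<d. ((\<beta> ^ i * x) ^ ((p ^ m) ^ b)) ^ (p ^ a))"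
        by (rule freshmans_dream_sum'[OF pc]) (simp add: assms(2))
      also have "\<dots> = (\<Sum>b<d. (\<beta> ^ i * x) ^ (p ^ (a + m*b)))"
        by (simp add: power_mult[symmetric] power_add power_mult_distrib mult_ac)
      finally show "(\<Sum>b<d. (\<beta> ^ i * x) ^ (p ^ (a + m*b))) = (\<Sum>b<d. (\<beta> ^ i * x) ^ ((p ^ m) ^ b)) ^ (p ^ a)" by simp
    qed
    also have "\<dots> = (\<Sum>a<m. (\<beta> ^ i * ff_trace (p ^ m) d x) ^ (p ^ a))"
      unfolding ff_trace_def
      by (simp add: power_mult_distrib biq sum_distrib_left)
    finally show ?thesis unfolding ff_trace_def .
  qed
  have bmod: "\<beta> ^ k = \<beta> ^ (k mod s)" for k
  proof -
    have "\<beta> ^ k = \<beta> ^ (s * (k div s) + k mod s)" by simp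
    also have "\<dots> = \<beta> ^ (k mod s)" by (simp only: power_add power_mult bs) simp
    finally show ?thesis .
  qed
  have main: "\<forall>j<t.
              (ff_trace (p ^ m) d (\<gamma> ^ j) = 0 \<longrightarrow>
                 (\<forall>i<s. ff_trace p n (\<beta> ^ i * \<gamma> ^ j) = 0))
            \<and> (\<forall>r::nat. ff_trace (p ^ m) d (\<gamma> ^ j) = \<beta> ^ r \<longrightarrow>
                 (\<forall>i<s. ff_trace p n (\<beta> ^ i * \<gamma> ^ j) = ff_trace p m (\<beta> ^ ((r + i) mod s))))"
  proof (intro allI impI conjI)
    fix j i assume "ff_trace (p ^ m) d (\<gamma> ^ j) = 0"
    then show "ff_trace p n (\<beta> ^ i * \<gamma> ^ j) = 0"
      unfolding key using p1 by (simp add: ff_trace_def power_0_left)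
  next
    fix j r i assume "ff_trace (p ^ m) d (\<gamma> ^ j) = \<beta> ^ r"
    then show "ff_trace p n (\<beta> ^ i * \<gamma> ^ j) = ff_trace p m (\<beta> ^ ((r + i) mod s))"
      unfolding key by (metis bmod power_add add.commute)
  qed
  then show ?thesis unfolding Let_def s_def t_def \<beta>_def \<gamma>_def d_def by simp
qed

end
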